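(* Consider a spherically symmetric spacetime in the setting described in the context, belonging to Case 2 (that is, $\partial_v r_->0$). Then the spacetime is either of Type 1 or of Type 2, i.e. $-1<U^{(+)}_0<U^{(+)}_\infty\le U^{(-)}_\infty<U^{(-)}_0<+1$, with $U^{(+)}_\infty=U^{(-)}_\infty$ (Type 1) or $U^{(+)}_\infty<U^{(-)}_\infty$ (Type 2).
   Context: Consider a spherically symmetric spacetime with metric $ds^2=-f(v,r)A(v,r)^2dv^2+2A(v,r)\,dr\,dv+r^2d\Omega^2$, where $d\Omega^2$ is the unit 2-sphere metric, $A>0$, $\lim_{r\to\infty}f=\lim_{r\to\infty}A=1$, and $f(v,0)=1$, $\partial_rf(v,0)=0$, $\partial_rA(v,0)=0$. It is assumed that $f(v,\cdot)=0$ has exactly two roots $r_+(v)>r_-(v)$ (the outer and inner apparent horizons, AHs), so $f(v,r)=F(v,r)(r-r_+(v))(r-r_-(v))$ with $F>0$; set $h=AF>0$. Standing assumptions: (1) $\partial_v r_+<0$; (2) $\lim_{v\to\infty}r_\pm(v)=r_c$; (3) the sign of $\partial_v r_-$ never changes; (4) the limits as $v\to\infty$ of $A,F,h$ behave as analytic functions of $r$, so all $\partial_r^n h(v,r)$ converge to finite values as $v\to\infty$; $h_c:=\lim_{v\to\infty}h(v,r_c)$. Put $x=r-r_c$, $x_\pm(v)=r_\pm(v)-r_c$ (so $x_\pm\to 0$), and regard $h$ as a function of $(v,x)$. Radially outgoing null geodesics are the solutions of $dx/dv=\tfrac12 h(v,x)(x-x_+(v))(x-x_-(v))$. Compactified outgoing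 null coordinate: fix $v_0$ and work in $v\ge v_0$; set $U=\frac{2}{\pi}\arctan((v-v_0)/r_c)$ on $\{r=0,\,v\ge v_0\}$ and $U=-\frac{2}{\pi}\arctan(r/r_c)$ on $\{v=v_0,\,r>0\}$, and extend $U$ by requiring it to be constant along each radially outgoing null geodesic; $U$ ranges over $[-1,1]$. The outer and inner AHs lie at $U=U^{(\pm)}(v)$; $U^{(\pm)}_0=U^{(\pm)}(v_0)$ and $U^{(\pm)}_\infty=\lim_{v\to\infty}U^{(\pm)}(v)$. A Case 2 spacetime is of Type 1 if $U^{(+)}_\infty=U^{(-)}_\infty$ and of Type 2 if $U^{(+)}_\infty<U^{(-)}_\infty$. *)

theory Defs
  imports "HOL-Analysis.Analysis"
begin

text \<open>A radially outgoing null geodesic of ds^2 = -f A^2 dv^2 + 2 A dr dv + r^2 dOmega^2,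
  parametrised by v on the interval [a,b], staying in the region r >= 0:
  dr/dv = f A / 2.\<close>
definition out_null_geod ::
  "(real \<Rightarrow> real \<Rightarrow> real) \<Rightarrow> (real \<Rightarrow> real \<Rightarrow> real) \<Rightarrow> (real \<Rightarrow> real) \<Rightarrow> real \<Rightarrow> real \<Rightarrow> bool"
where
  "out_null_geod f A \<gamma> a b \<longleftrightarrow> a \<le> b \<and>
     (\<forall>t\<in>{a..b}. 0 \<le> \<gamma> t \<and>
        (\<gamma> has_real_derivative (f t (\<gamma> t) * A t (\<gamma> t) / 2)) (at t within {a..b}))"

text \<open>Compactified outgoing null coordinate U at the point (v,r), v >= v0, r >= 0:
  follow the outgoing null geodesic through (v,r) back to the boundary of the region
  {v >= v0, r >= 0}; it either starts at the centre r = 0 at some time a >= v0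
  (U = (2/pi) arctan((a - v0)/rc)) or on the initial slice v = v0 at radius r1
  (U = -(2/pi) arctan(r1/rc)).\<close>
definition U_coord ::
  "(real \<Rightarrow> real \<Rightarrow> real) \<Rightarrow> (real \<Rightarrow> real \<Rightarrow> real) \<Rightarrow> real \<Rightarrow> real \<Rightarrow> real \<Rightarrow> real \<Rightarrow> real"
where
  "U_coord f A v0 rc v r = (THE u. \<exists>\<gamma> a. out_null_geod f A \<gamma> a v \<and> \<gamma> v = r \<and> v0 \<le> a \<and>
      ((a = v0 \<and> u = - (2 / pi) * arctan (\<gamma> v0 / rc)) \<or>
       (\<gamma> a = 0 \<and> u = (2 / pi) * arctan ((a - v0) / rc))))"

definition real_analytic_at :: "(real \<Rightarrow> real) \<Rightarrow> real \<Rightarrow> bool" where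
  "real_analytic_at g x \<longleftrightarrow>
     (\<exists>\<delta>>0. \<exists>c::nat \<Rightarrow> real. \<forall>y. \<bar>y - x\<bar> < \<delta> \<longrightarrow> (\<lambda>n. c n * (y - x) ^ n) sums g y)"

end

theory Submission
  imports Defs
begin


lemma barrier1:
  fixes \<phi> \<phi>' :: "real \<Rightarrow> real"
  assumes der: "\<And>t. t \<in> {a..b} \<Longrightarrow> (\<phi> has_real_derivative \<phi>' t) (at t within {a..b})"
    and zer: "\<And>t. t \<in> {a..b} \<Longrightarrow> \<phi> t = 0 \<Longrightarrow> \<phi>' t > 0"
    and b': "b' \<in> {a..b}" "\<phi> b' < 0"
  shows "\<forall>t\<in>{a..b'}. \<phi> t < 0"
proof (rule ccontr)
  assume "\<not> ?thesis"
  then obtain t0 where t0: "t0 \<in> {a..b'}" "\<phi> t0 \<ge> 0" by force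
  have cont: "continuous_on {a..b} \<phi>"
    using der by (meson DERIV_continuous continuous_on_eq_continuous_within)
  have contb: "continuous_on {c..d} \<phi>" if "a \<le> c" "d \<le> b" for c d
    by (rule continuous_on_subset[OF cont]) (use that in auto)
  define Z where "Z = {s \<in> {t0..b'}. \<phi> s = 0}"
  have Zne: "Z \<noteq> {}"
  proof -
    obtain x where "t0 \<le> x" "x \<le> b'" "\<phi> x = 0"
      using IVT2'[of \<phi> b' 0 t0] t0 b' contb[of t0 b'] by auto
    then show ?thesis unfolding Z_def by auto
  qed
  have Zcl: "closed Z" unfolding Z_def
    by (rule continuous_closed_preimage_constant) (use contb[of t0 b'] t0 b' in auto)
  have Zbd: "bdd_above Z" unfolding Z_def by (rule bdd_aboveI[of _ b']) auto
  define z where "z = Sup Z"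
  have zZ: "z \<in> Z" unfolding z_def using closed_contains_Sup Zne Zbd Zcl by blast
  have zle: "\<And>s. s \<in> Z \<Longrightarrow> s \<le> z" unfolding z_def using Zbd by (simp add: cSup_upper)
  have z1: "z \<in> {a..b}" "\<phi> z = 0" "t0 \<le> z" "z \<le> b'" using zZ t0 b' unfolding Z_def by auto
  have "z \<noteq> b'" using z1 b' by auto
  with z1 have zb: "z < b'" by auto
  have "\<phi>' z > 0" using zer z1 by auto
  from has_real_derivative_pos_inc_right[OF der[OF z1(1)] this]
  obtain d where d: "d > 0" "\<And>h. h > 0 \<Longrightarrow> z + h \<in> {a..b} \<Longrightarrow> h < d \<Longrightarrow> \<phi> z < \<phi> (z + h)" by auto
  define h where "h = min (d/2) ((b' - z)/2)"
  have h1: "h \<le> (b' - z)/2" "h \<le> d/2" unfolding h_def by (rule min.cobounded2, rule min.cobounded1)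
  have h0: "h > 0" unfolding h_def using d(1) zb by (simp add: min_def)
  have h: "h > 0" "h < d" "z + h < b'" using d(1) zb h1 h0 by (simp_all add: field_simps)
  have zh: "z + h \<in> {a..b}" using h z1 b' by auto
  have pos: "\<phi> (z + h) > 0" using d(2)[OF h(1) zh h(2)] z1 by linarith
  obtain x where x: "z + h \<le> x" "x \<le> b'" "\<phi> x = 0"
    using IVT2'[of \<phi> b' 0 "z+h"] pos b' h contb[of "z+h" b'] z1 by auto
  have "x \<in> Z" unfolding Z_def using x z1 h by auto
  with zle[of x] x h show False by auto
qed

lemma barrier:
  fixes \<phi> \<phi>' :: "real \<Rightarrow> real"
  assumes der: "\<And>t. t \<in> {a..b} \<Longrightarrow> (\<phi> has_real_derivative \<phi>' t) (at t within {a..b})"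
    and zer: "\<And>t. t \<in> {a..b} \<Longrightarrow> \<phi> t = 0 \<Longrightarrow> \<phi>' t > 0"
    and ab: "a \<le> b" and pb: "\<phi> b \<le> 0"
  shows "\<forall>t\<in>{a..<b}. \<phi> t < 0"
proof
  fix t assume t: "t \<in> {a..<b}"
  show "\<phi> t < 0"
  proof (cases "\<phi> b < 0")
    case True
    have "\<forall>t\<in>{a..b}. \<phi> t < 0" by (rule barrier1[OF der zer]) (use True ab in auto)
    then show ?thesis using t by auto
  next
    case False
    then have pb0: "\<phi> b = 0" using pb by auto
    have "\<phi>' b > 0" using zer pb0 ab by auto
    from has_real_derivative_pos_inc_left[OF der[of b] this]
    obtain d where d: "d > 0" "\<And>h. h > 0 \<Longrightarrow> b - h \<in> {a..b} \<Longrightarrow> h < d \<Longrightarrow> \<phi> (b - h) < \<phi> b"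
      using ab by auto
    define h where "h = min (d/2) ((b - t)/2)"
    have h1: "h \<le> (b - t)/2" "h \<le> d/2" unfolding h_def by (rule min.cobounded2, rule min.cobounded1)
    have h0: "h > 0" unfolding h_def using d(1) t by (simp add: min_def)
    have h: "h > 0" "h < d" "t < b - h" using d(1) t h1 h0 by (simp_all add: field_simps)
    have bh: "b - h \<in> {a..b}" using h t by auto
    have "\<phi> (b - h) < 0" using d(2)[OF h(1) bh h(2)] pb0 by linarith
    then have "\<forall>t\<in>{a..b-h}. \<phi> t < 0" using bh by (intro barrier1[OF der zer]) auto
    then show ?thesis using t h by auto
  qed
qed



definition solves :: "(real \<Rightarrow> real \<Rightarrow> real) \<Rightarrow> (real \<Rightarrow> real) \<Rightarrow> real \<Rightarrow> real \<Rightarrow> bool" where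
  "solves g \<gamma> a b \<longleftrightarrow> (\<forall>t\<in>{a..b}. (\<gamma> has_real_derivative g t (\<gamma> t)) (at t within {a..b}))"

lemma solves_cont: "solves g \<gamma> a b \<Longrightarrow> continuous_on {a..b} \<gamma>"
  unfolding solves_def by (meson DERIV_continuous continuous_on_eq_continuous_within)

lemma compact_bound2:
  fixes k :: "real \<Rightarrow> real \<Rightarrow> real"
  assumes kc: "continuous_on UNIV (\<lambda>p. k (fst p) (snd p))"
  shows "\<exists>B. \<forall>t\<in>{a..b}. \<forall>x\<in>{lo..hi}. \<bar>k t x\<bar> \<le> B"
proof -
  have "compact ((\<lambda>p. k (fst p) (snd p)) ` ({a..b} \<times> {lo..hi}))"
    by (rule compact_continuous_image[OF continuous_on_subset[OF kc]]) (auto intro: compact_Times)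
  then have "bounded ((\<lambda>p. k (fst p) (snd p)) ` ({a..b} \<times> {lo..hi}))" by (rule compact_imp_bounded)
  then obtain B where B: "\<forall>y\<in>(\<lambda>p. k (fst p) (snd p)) ` ({a..b} \<times> {lo..hi}). norm y \<le> B"
    unfolding bounded_iff by blast
  show ?thesis
  proof (intro exI ballI)
    fix t x assume "t \<in> {a..b}" "x \<in> {lo..hi}"
    then have "(t, x) \<in> {a..b} \<times> {lo..hi}" by auto
    then show "\<bar>k t x\<bar> \<le> B" using B by force
  qed
qed

lemma lip2:
  fixes g gx :: "real \<Rightarrow> real \<Rightarrow> real"
  assumes gd: "\<And>t x. ((\<lambda>y. g t y) has_real_derivative gx t x) (at x)"
    and gxc: "continuous_on UNIV (\<lambda>p. gx (fst p) (snd p))"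
  shows "\<exists>L\<ge>0. \<forall>t\<in>{a..b}. \<forall>x\<in>{lo..hi}. \<forall>y\<in>{lo..hi}. \<bar>g t x - g t y\<bar> \<le> L * \<bar>x - y\<bar>"
proof -
  obtain B where B: "\<forall>t\<in>{a..b}. \<forall>x\<in>{lo..hi}. \<bar>gx t x\<bar> \<le> B"
    using compact_bound2[OF gxc] by blast
  define L where "L = max 0 B"
  have key: "\<bar>g t x - g t y\<bar> \<le> L * \<bar>x - y\<bar>"
    if t: "t \<in> {a..b}" and xy: "x \<in> {lo..hi}" "y \<in> {lo..hi}" "x < y" for t x y
  proof -
    obtain z where z: "x < z" "z < y" "g t y - g t x = (y - x) * gx t z"
      using MVT2[of x y "\<lambda>y. g t y" "gx t"] gd xy by blast
    have "z \<in> {lo..hi}" using z xy by auto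
    then have "\<bar>gx t z\<bar> \<le> L" using B t unfolding L_def by force
    then have "\<bar>g t y - g t x\<bar> \<le> (y - x) * L" using z xy
      by (simp add: abs_mult mult_left_mono)
    then show ?thesis using xy by (simp add: abs_minus_commute mult.commute)
  qed
  show ?thesis
  proof (intro exI conjI ballI)
    show "0 \<le> L" unfolding L_def by simp
    fix t x y assume t: "t \<in> {a..b}" and x: "x \<in> {lo..hi}" and y: "y \<in> {lo..hi}"
    consider "x < y" | "x = y" | "y < x" by linarith
    then show "\<bar>g t x - g t y\<bar> \<le> L * \<bar>x - y\<bar>"
    proof cases
      case 1 then show ?thesis using key[OF t x y] by simp
    next
      case 2 then show ?thesis by simp
    next
      case 3 then show ?thesis using key[OF t y x] by (simp add: abs_minus_commute)
    qed
  qed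
qed

lemma solves_interior:
  assumes "solves g \<gamma> a b" "a < s" "s < b"
  shows "(\<gamma> has_real_derivative g s (\<gamma> s)) (at s)"
  using assms unfolding solves_def by (metis at_within_Icc_at atLeastAtMost_iff less_eq_real_def)

lemma uniq:
  fixes g gx :: "real \<Rightarrow> real \<Rightarrow> real"
  assumes gd: "\<And>t x. ((\<lambda>y. g t y) has_real_derivative gx t x) (at x)"
    and gxc: "continuous_on UNIV (\<lambda>p. gx (fst p) (snd p))"
    and sx: "solves g x a b" and sy: "solves g y a b"
    and c: "c \<in> {a..b}" and xc: "x c = y c"
  shows "\<forall>t\<in>{a..b}. x t = y t"
proof -
  have cx: "continuous_on {a..b} x" and cy: "continuous_on {a..b} y"
    using sx sy by (auto intro: solves_cont)
  have "bounded (x ` {a..b})" "bounded (y ` {a..b})"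
    using cx cy by (auto intro!: compact_imp_bounded compact_continuous_image)
  then obtain K1 K2 where K1: "\<forall>u\<in>x ` {a..b}. norm u \<le> K1" and K2: "\<forall>u\<in>y ` {a..b}. norm u \<le> K2"
    unfolding bounded_iff by metis
  define K where "K = max K1 K2"
  have xK: "x t \<in> {-K..K}" and yK: "y t \<in> {-K..K}" if "t \<in> {a..b}" for t
  proof -
    have "\<bar>x t\<bar> \<le> K1" "\<bar>y t\<bar> \<le> K2" using K1 K2 that by auto
    then have "\<bar>x t\<bar> \<le> K" "\<bar>y t\<bar> \<le> K" unfolding K_def by linarith+
    then show "x t \<in> {-K..K}" "y t \<in> {-K..K}" by (auto simp: abs_le_iff)
  qed
  obtain L where L0: "L \<ge> 0" and L: "\<forall>t\<in>{a..b}. \<forall>u\<in>{-K..K}. \<forall>v\<in>{-K..K}. \<bar>g t u - g t v\<bar> \<le> L * \<bar>u - v\<bar>"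
    using lip2[OF gd gxc] by blast
  define w where "w t = (x t - y t)^2" for t
  define w' where "w' t = 2 * (x t - y t) * (g t (x t) - g t (y t))" for t
  have wder: "(w has_real_derivative w' s) (at s)" if "a < s" "s < b" for s
    unfolding w_def w'_def
    using solves_interior[OF sx that] solves_interior[OF sy that]
    by (auto intro!: derivative_eq_intros)
  have w'b: "\<bar>w' s\<bar> \<le> 2 * L * w s" if "s \<in> {a..b}" for s
  proof -
    have "\<bar>g s (x s) - g s (y s)\<bar> \<le> L * \<bar>x s - y s\<bar>" using L xK yK that by blast
    then have "\<bar>x s - y s\<bar> * \<bar>g s (x s) - g s (y s)\<bar> \<le> \<bar>x s - y s\<bar> * (L * \<bar>x s - y s\<bar>)"
      by (simp add: mult_left_mono)
    have e1: "\<bar>w' s\<bar> = 2 * (\<bar>x s - y s\<bar> * \<bar>g s (x s) - g s (y s)\<bar>)" unfolding w'_def abs_mult by (simp add: mult.assoc)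
    have "\<bar>x s - y s\<bar> * (L * \<bar>x s - y s\<bar>) = L * (\<bar>x s - y s\<bar> * \<bar>x s - y s\<bar>)" by (simp add: mult_ac)
    also have "\<dots> = L * w s" unfolding w_def by (simp add: abs_mult_self_eq power2_eq_square)
    finally have e2: "\<bar>x s - y s\<bar> * (L * \<bar>x s - y s\<bar>) = L * w s" .
    have P: "\<bar>x s - y s\<bar> * \<bar>g s (x s) - g s (y s)\<bar> \<le> L * w s"
      using e2 \<open>\<bar>x s - y s\<bar> * \<bar>g s (x s) - g s (y s)\<bar> \<le> \<bar>x s - y s\<bar> * (L * \<bar>x s - y s\<bar>)\<close> by linarith
    show ?thesis using e1 P by linarith
  qed
  have wc: "continuous_on {a..b} w" unfolding w_def by (intro continuous_intros cx cy)
  have w0: "w t \<ge> 0" for t unfolding w_def by simp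
  have wc0: "w c = 0" unfolding w_def using xc by simp
  have "w t = 0" if t: "t \<in> {a..b}" for t
  proof (cases "c \<le> t")
    case True
    define p where "p s = w s * exp (- (2 * L) * s)" for s
    have "p c \<ge> p t"
    proof (rule DERIV_nonpos_imp_decreasing_open[OF True])
      fix s assume s: "c < s" "s < t"
      then have s': "a < s" "s < b" using c t by auto
      have "(p has_real_derivative (w' s * exp (- (2 * L) * s) + w s * (exp (- (2 * L) * s) * (- (2 * L))))) (at s)"
        unfolding p_def by (auto intro!: derivative_eq_intros wder[OF s'])
      moreover have "w' s * exp (- (2 * L) * s) + w s * (exp (- (2 * L) * s) * (- (2 * L))) \<le> 0"
      proof -
        have "w' s \<le> 2 * L * w s" using w'b[of s] s' by auto
        then have "w' s * exp (- (2 * L) * s) \<le> (2 * L * w s) * exp (- (2 * L) * s)"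
          by (simp add: mult_right_mono)
        then show ?thesis by (simp add: algebra_simps)
      qed
      ultimately show "\<exists>y. (p has_real_derivative y) (at s) \<and> y \<le> 0" by blast
    next
      show "continuous_on {c..t} p" unfolding p_def
        by (intro continuous_intros continuous_on_subset[OF wc]) (use c t in auto)
    qed
    then have "p t \<le> 0" unfolding p_def using wc0 by simp
    then show ?thesis using w0[of t] unfolding p_def by (simp add: mult_le_0_iff)
  next
    case False
    then have tc: "t \<le> c" by auto
    define p where "p s = w s * exp ((2 * L) * s)" for s
    have "p t \<le> p c"
    proof (rule DERIV_nonneg_imp_increasing_open[OF tc])
      fix s assume s: "t < s" "s < c"
      then have s': "a < s" "s < b" using c t by auto
      have "(p has_real_derivative (w' s * exp ((2 * L) * s) + w s * (exp ((2 * L) * s) * (2 * L)))) (at s)"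
        unfolding p_def by (auto intro!: derivative_eq_intros wder[OF s'])
      moreover have "w' s * exp ((2 * L) * s) + w s * (exp ((2 * L) * s) * (2 * L)) \<ge> 0"
      proof -
        have "- w' s \<le> 2 * L * w s" using w'b[of s] s' by auto
        then have "(- w' s) * exp ((2 * L) * s) \<le> (2 * L * w s) * exp ((2 * L) * s)"
          by (rule mult_right_mono) simp
        then show ?thesis by (simp add: algebra_simps)
      qed
      ultimately show "\<exists>y. (p has_real_derivative y) (at s) \<and> y \<ge> 0" by blast
    next
      show "continuous_on {t..c} p" unfolding p_def
        by (intro continuous_intros continuous_on_subset[OF wc]) (use c t in auto)
    qed
    then have "p t \<le> 0" unfolding p_def using wc0 by simp
    then show ?thesis using w0[of t] unfolding p_def by (simp add: mult_le_0_iff)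
  qed
  then show ?thesis unfolding w_def by simp
qed



lemma integral_pow_rev:
  fixes t b :: real
  assumes "t \<le> b"
  shows "integral {t..b} (\<lambda>s. (b - s)^k) = (b - t)^(Suc k) / real (Suc k)"
proof -
  define F where "F s = - ((b - s)^(Suc k) / real (Suc k))" for s
  have "((\<lambda>s. (b - s)^k) has_integral (F b - F t)) {t..b}"
  proof (rule fundamental_theorem_of_calculus[OF assms])
    fix x assume "x \<in> {t..b}"
    have d1: "((\<lambda>s. b - s) has_real_derivative (0 - 1)) (at x within {t..b})"
      by (intro derivative_intros)
    have d3: "((\<lambda>s. - ((b - s)^(Suc k) / real (Suc k))) has_real_derivative
        - (of_nat (Suc k) * ((0 - 1) * (b - x)^(Suc k - Suc 0)) / real (Suc k))) (at x within {t..b})"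
      by (intro DERIV_minus DERIV_cdivide DERIV_power d1)
    have e: "- (of_nat (Suc k) * ((0 - 1) * (b - x)^(Suc k - Suc 0)) / real (Suc k)) = (b - x)^k" by simp
    have "(F has_real_derivative (b - x)^k) (at x within {t..b})"
      using d3 unfolding e F_def[abs_def] .
    then show "(F has_vector_derivative (b - x)^k) (at x within {t..b})"
      by (simp add: has_real_derivative_iff_has_vector_derivative)
  qed
  then show ?thesis by (simp add: integral_unique F_def)
qed

lemma cont_comp2:
  fixes G :: "real \<Rightarrow> real \<Rightarrow> real"
  assumes Gc: "continuous_on UNIV (\<lambda>p. G (fst p) (snd p))" and yc: "continuous_on S y"
  shows "continuous_on S (\<lambda>s. G s (y s))"
proof -
  have "continuous_on S (\<lambda>s. (\<lambda>p. G (fst p) (snd p)) (s, y s))"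
    by (rule continuous_on_compose2[OF Gc]) (auto intro!: continuous_intros yc)
  then show ?thesis by simp
qed

lemma exist_global:
  fixes G :: "real \<Rightarrow> real \<Rightarrow> real"
  assumes Gc: "continuous_on UNIV (\<lambda>p. G (fst p) (snd p))"
    and GB: "\<And>t x. t \<in> {a..b} \<Longrightarrow> \<bar>G t x\<bar> \<le> B"
    and GL: "\<And>t x y. t \<in> {a..b} \<Longrightarrow> \<bar>G t x - G t y\<bar> \<le> L * \<bar>x - y\<bar>"
    and L0: "L \<ge> 0" and B0: "B \<ge> 0" and ab: "a \<le> b"
  shows "\<exists>\<gamma>. solves G \<gamma> a b \<and> \<gamma> b = r0"
proof -
  define Y :: "nat \<Rightarrow> real \<Rightarrow> real" where
    "Y = rec_nat (\<lambda>t. r0) (\<lambda>n y t. r0 - integral {t..b} (\<lambda>s. G s (y s)))"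
  have Y0: "Y 0 = (\<lambda>t. r0)" unfolding Y_def by simp
  have YS: "Y (Suc n) t = r0 - integral {t..b} (\<lambda>s. G s (Y n s))" for n t unfolding Y_def by simp
  have Yc: "continuous_on {a..b} (Y n)" for n
  proof (induction n)
    case 0 then show ?case by (simp add: Y0)
  next
    case (Suc n)
    have "continuous_on {a..b} (\<lambda>s. G s (Y n s))" by (rule cont_comp2[OF Gc Suc])
    then have "continuous_on {a..b} (\<lambda>t. integral {t..b} (\<lambda>s. G s (Y n s)))"
      by (intro indefinite_integral_continuous_1' integrable_continuous_interval)
    then have "continuous_on {a..b} (\<lambda>t. r0 - integral {t..b} (\<lambda>s. G s (Y n s)))"
      by (intro continuous_intros)
    then show ?case by (simp add: YS[abs_def])
  qed
  have hc: "continuous_on {t..b} (\<lambda>s. G s (Y n s))" if "a \<le> t" for n t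
    by (rule continuous_on_subset[OF cont_comp2[OF Gc Yc]]) (use that in auto)
  have hi: "(\<lambda>s. G s (Y n s)) integrable_on {t..b}" if "a \<le> t" for n t
    by (rule integrable_continuous_interval[OF hc[OF that]])
  have diff: "\<bar>Y (Suc n) t - Y n t\<bar> \<le> B * L^n * (b - t)^(Suc n) / fact (Suc n)" if t: "t \<in> {a..b}" for n t
    using t
  proof (induction n arbitrary: t)
    case 0
    then have tb: "t \<le> b" "a \<le> t" by auto
    have "norm (integral {t..b} (\<lambda>s. G s (Y 0 s))) \<le> integral {t..b} (\<lambda>s. B)"
      by (rule integral_norm_bound_integral[OF hi[OF tb(2)]]) (use GB tb in auto)
    then show ?case using tb by (simp add: YS Y0 mult.commute)
  next
    case (Suc n)
    then have tb: "t \<le> b" "a \<le> t" by auto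
    have eq: "Y (Suc (Suc n)) t - Y (Suc n) t = - integral {t..b} (\<lambda>s. G s (Y (Suc n) s) - G s (Y n s))"
    proof -
      have "Y (Suc (Suc n)) t - Y (Suc n) t = - (integral {t..b} (\<lambda>s. G s (Y (Suc n) s)) - integral {t..b} (\<lambda>s. G s (Y n s)))"
        unfolding YS[of "Suc n" t] YS[of n t] by simp
      then show ?thesis using integral_diff[OF hi[OF tb(2)] hi[OF tb(2)], of "Suc n" n] by simp
    qed
    have "norm (integral {t..b} (\<lambda>s. G s (Y (Suc n) s) - G s (Y n s)))
        \<le> integral {t..b} (\<lambda>s. L * (B * L^n * (b - s)^(Suc n) / fact (Suc n)))"
    proof (rule integral_norm_bound_integral)
      show "(\<lambda>s. G s (Y (Suc n) s) - G s (Y n s)) integrable_on {t..b}"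
        by (intro integrable_diff hi tb)
      show "(\<lambda>s. L * (B * L ^ n * (b - s) ^ Suc n / fact (Suc n))) integrable_on {t..b}"
        by (intro integrable_continuous_interval continuous_intros) auto
      fix s assume s: "s \<in> {t..b}"
      then have sab: "s \<in> {a..b}" using tb by auto
      have "\<bar>G s (Y (Suc n) s) - G s (Y n s)\<bar> \<le> L * \<bar>Y (Suc n) s - Y n s\<bar>" using GL sab by blast
      also have "\<dots> \<le> L * (B * L^n * (b - s)^(Suc n) / fact (Suc n))"
        by (rule mult_left_mono[OF Suc.IH[OF sab] L0])
      finally show "norm (G s (Y (Suc n) s) - G s (Y n s)) \<le> L * (B * L ^ n * (b - s) ^ Suc n / fact (Suc n))"
        by simp
    qed
    also have "\<dots> = integral {t..b} (\<lambda>s. (L * B * L^n / fact (Suc n)) * (b - s)^(Suc n))"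
      by (rule arg_cong[where f="integral {t..b}"]) (simp add: fun_eq_iff)
    also have "\<dots> = (L * B * L^n / fact (Suc n)) * integral {t..b} (\<lambda>s. (b - s)^(Suc n))"
      by (rule integral_mult_right)
    also have "\<dots> = (L * B * L^n / fact (Suc n)) * ((b - t)^(Suc (Suc n)) / real (Suc (Suc n)))"
      by (simp only: integral_pow_rev[OF tb(1)])
    also have "\<dots> = B * L^(Suc n) * (b - t)^(Suc (Suc n)) / fact (Suc (Suc n))"
      by (simp add: field_simps)
    finally show ?case using eq by simp
  qed
  define M where "M n = B * (b - a) * (L * (b - a))^n / fact n" for n
  have Mb: "norm (Y (Suc n) t - Y n t) \<le> M n" if t: "t \<in> {a..b}" for n t
  proof -
    have bt: "0 \<le> b - t" "b - t \<le> b - a" using t by auto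
    have "(b - t)^(Suc n) \<le> (b - a)^(Suc n)" by (rule power_mono) (use bt in auto)
    then have "B * L^n * (b - t)^(Suc n) \<le> B * L^n * (b - a)^(Suc n)"
      by (intro mult_left_mono) (use B0 L0 in auto)
    then have "B * L^n * (b - t)^(Suc n) / fact (Suc n) \<le> B * L^n * (b - a)^(Suc n) / fact (Suc n)"
      by (simp add: divide_right_mono)
    also have "\<dots> \<le> B * L^n * (b - a)^(Suc n) / fact n"
      by (rule divide_left_mono) (use B0 L0 ab in \<open>auto simp: fact_mono\<close>)
    also have "\<dots> = M n" unfolding M_def power_mult_distrib by (simp add: mult_ac)
    finally show ?thesis using diff[OF t, of n] by simp
  qed
  have Ms: "summable M"
  proof -
    have "summable (\<lambda>n. B * (b - a) * (inverse (fact n) * (L * (b - a))^n))"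
      by (intro summable_mult summable_exp)
    then show ?thesis unfolding M_def by (simp add: field_simps)
  qed
  define y where "y t = r0 + (\<Sum>i. Y (Suc i) t - Y i t)" for t
  have ul0: "uniform_limit {a..b} (\<lambda>n t. \<Sum>i<n. Y (Suc i) t - Y i t) (\<lambda>t. \<Sum>i. Y (Suc i) t - Y i t) sequentially"
    by (rule Weierstrass_m_test[OF Mb Ms])
  have ul: "uniform_limit {a..b} Y y sequentially"
  proof (rule uniform_limitI)
    fix e :: real assume e: "e > 0"
    have "\<forall>\<^sub>F n in sequentially. \<forall>t\<in>{a..b}. dist (\<Sum>i<n. Y (Suc i) t - Y i t) (\<Sum>i. Y (Suc i) t - Y i t) < e"
      using uniform_limitD[OF ul0 e] .
    then show "\<forall>\<^sub>F n in sequentially. \<forall>t\<in>{a..b}. dist (Y n t) (y t) < e"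
    proof (rule eventually_mono)
      fix n assume H: "\<forall>t\<in>{a..b}. dist (\<Sum>i<n. Y (Suc i) t - Y i t) (\<Sum>i. Y (Suc i) t - Y i t) < e"
      show "\<forall>t\<in>{a..b}. dist (Y n t) (y t) < e"
      proof
        fix t assume t: "t \<in> {a..b}"
        have "(\<Sum>i<n. Y (Suc i) t - Y i t) = Y n t - r0"
          using sum_lessThan_telescope[of "\<lambda>i. Y i t" n] by (simp add: Y0)
        then have "Y n t - y t = (\<Sum>i<n. Y (Suc i) t - Y i t) - (\<Sum>i. Y (Suc i) t - Y i t)"
          unfolding y_def by simp
        moreover have "dist (\<Sum>i<n. Y (Suc i) t - Y i t) (\<Sum>i. Y (Suc i) t - Y i t) < e" using H t by blast
        ultimately show "dist (Y n t) (y t) < e" unfolding dist_real_def by simp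
      qed
    qed
  qed
  have yc: "continuous_on {a..b} y"
    by (rule uniform_limit_theorem[OF _ ul]) (auto simp: Yc)
  have hyc: "continuous_on {a..b} (\<lambda>s. G s (y s))" by (rule cont_comp2[OF Gc yc])
  have inteq: "y t = r0 - integral {t..b} (\<lambda>s. G s (y s))" if t: "t \<in> {a..b}" for t
  proof -
    have tb: "t \<le> b" "a \<le> t" using t by auto
    have hyi: "(\<lambda>s. G s (y s)) integrable_on {t..b}"
      by (rule integrable_continuous_interval, rule continuous_on_subset[OF hyc]) (use tb in auto)
    define D where "D n = integral {t..b} (\<lambda>s. G s (Y n s) - G s (y s))" for n
    have D0: "D \<longlonglongrightarrow> 0"
    proof (rule tendstoI)
      fix e :: real assume e: "e > 0"
      define e' where "e' = e / (L * (b - a) + 1)"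
      have den: "L * (b - a) + 1 > 0" using L0 ab by (simp add: add_nonneg_pos)
      have e'0: "e' > 0" unfolding e'_def using e den by simp
      show "\<forall>\<^sub>F n in sequentially. dist (D n) 0 < e"
        using uniform_limitD[OF ul e'0]
      proof (rule eventually_mono)
        fix n assume H: "\<forall>s\<in>{a..b}. dist (Y n s) (y s) < e'"
        have "norm (D n) \<le> integral {t..b} (\<lambda>s. L * e')"
          unfolding D_def
        proof (rule integral_norm_bound_integral)
          show "(\<lambda>s. G s (Y n s) - G s (y s)) integrable_on {t..b}" by (intro integrable_diff hi hyi tb)
          show "(\<lambda>s. L * e') integrable_on {t..b}" by (rule integrable_const_ivl)
          fix s assume s: "s \<in> {t..b}"
          then have sab: "s \<in> {a..b}" using tb by auto
          have "\<bar>G s (Y n s) - G s (y s)\<bar> \<le> L * \<bar>Y n s - y s\<bar>" using GL sab by blast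
          also have "\<dots> \<le> L * e'"
          proof (rule mult_left_mono[OF _ L0])
            have "dist (Y n s) (y s) < e'" using H sab by blast
            then show "\<bar>Y n s - y s\<bar> \<le> e'" by (simp add: dist_real_def)
          qed
          finally show "norm (G s (Y n s) - G s (y s)) \<le> L * e'" by simp
        qed
        also have "\<dots> = L * e' * (b - t)" using tb by simp
        also have "\<dots> \<le> L * e' * (b - a)" using tb L0 e'0 by (intro mult_left_mono) auto
        also have "\<dots> < e"
        proof -
          have "L * e' * (b - a) = e * (L * (b - a)) / (L * (b - a) + 1)" unfolding e'_def by simp
          also have "\<dots> < e" using e den by (simp add: field_simps)
          finally show ?thesis .
        qed
        finally show "dist (D n) 0 < e" by simp
      qed
    qed
    have YSeq: "Y (Suc n) t = r0 - integral {t..b} (\<lambda>s. G s (y s)) - D n" for n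
      unfolding YS D_def using integral_diff[OF hi[OF tb(2)] hyi, of n] by simp
    have "(\<lambda>n. Y (Suc n) t) \<longlonglongrightarrow> r0 - integral {t..b} (\<lambda>s. G s (y s)) - 0"
      unfolding YSeq by (intro tendsto_intros D0)
    moreover have "(\<lambda>n. Y (Suc n) t) \<longlonglongrightarrow> y t"
      using tendsto_uniform_limitI[OF ul t] by (rule LIMSEQ_Suc)
    ultimately show ?thesis using LIMSEQ_unique by force
  qed
  have "solves G y a b"
    unfolding solves_def
  proof
    fix t assume t: "t \<in> {a..b}"
    have "((\<lambda>t. integral {t..b} (\<lambda>s. G s (y s))) has_real_derivative - G t (y t)) (at t within {a..b})"
      by (rule integral_has_real_derivative'[OF hyc t])
    then have "((\<lambda>t. r0 - integral {t..b} (\<lambda>s. G s (y s))) has_real_derivative G t (y t)) (at t within {a..b})"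
      by (auto intro!: derivative_eq_intros)
    then show "(y has_real_derivative G t (y t)) (at t within {a..b})"
      by (rule has_field_derivative_transform_within[where d=1]) (use t inteq in auto)
  qed
  moreover have "y b = r0" using inteq[of b] ab by simp
  ultimately show ?thesis by blast
qed



lemma solves_sub:
  assumes "solves g \<gamma> a b" "a \<le> a'" "b' \<le> b"
  shows "solves g \<gamma> a' b'"
  using assms unfolding solves_def
  by (meson DERIV_subset atLeastAtMost_iff atLeastatMost_subset_iff order_trans)

lemma clamp_lip: "\<bar>max (m::real) (min M x) - max m (min M y)\<bar> \<le> \<bar>x - y\<bar>"
  unfolding max_def min_def abs_real_def by (simp split: if_split; linarith)

lemma main_exist:
  fixes g gx :: "real \<Rightarrow> real \<Rightarrow> real" and rp rm rp' rm' :: "real \<Rightarrow> real"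
  assumes gc: "continuous_on UNIV (\<lambda>p. g (fst p) (snd p))"
    and gd: "\<And>t x. ((\<lambda>y. g t y) has_real_derivative gx t x) (at x)"
    and gxc: "continuous_on UNIV (\<lambda>p. gx (fst p) (snd p))"
    and rp_der: "\<And>t. (rp has_real_derivative rp' t) (at t)" and rp_neg: "\<And>t. rp' t < 0"
    and rm_der: "\<And>t. (rm has_real_derivative rm' t) (at t)" and rm_pos: "\<And>t. rm' t > 0"
    and gzp: "\<And>t. g t (rp t) = 0" and gzm: "\<And>t. g t (rm t) = 0"
    and hor: "\<And>t. rm t < rp t"
    and v: "v0 \<le> v" and r0: "rm v \<le> r0" "r0 \<le> rp v"
  shows "\<exists>\<gamma>. solves g \<gamma> v0 v \<and> \<gamma> v = r0 \<and> (\<forall>t\<in>{v0..v}. rm t \<le> \<gamma> t \<and> \<gamma> t \<le> rp t)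
           \<and> (\<forall>t\<in>{v0..<v}. rm t < \<gamma> t \<and> \<gamma> t < rp t)"
proof -
  define m where "m = rm v0"
  define M where "M = rp v0"
  have rpM: "rp t \<le> M" if "v0 \<le> t" for t
  proof (cases "v0 = t")
    case False
    then have "rp t < rp v0"
      using that by (intro DERIV_neg_imp_decreasing[of v0 t rp]) (use rp_der rp_neg in auto)
    then show ?thesis unfolding M_def by simp
  qed (simp add: M_def)
  have rmm: "m \<le> rm t" if "v0 \<le> t" for t
  proof (cases "v0 = t")
    case False
    then have "rm v0 < rm t"
      using that by (intro DERIV_pos_imp_increasing[of v0 t rm]) (use rm_der rm_pos in auto)
    then show ?thesis unfolding m_def by simp
  qed (simp add: m_def)
  have mM: "m \<le> M" unfolding m_def M_def using hor[of v0] by simp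
  define c where "c x = max m (min M x)" for x
  have c_in: "c x \<in> {m..M}" for x unfolding c_def using mM by auto
  have c_id: "x \<in> {m..M} \<Longrightarrow> c x = x" for x unfolding c_def by auto
  have c_lip: "\<bar>c x - c y\<bar> \<le> \<bar>x - y\<bar>" for x y unfolding c_def by (rule clamp_lip)
  have c_cont: "continuous_on UNIV c" unfolding c_def[abs_def] by (intro continuous_intros)
  define G where "G t x = g t (c x)" for t x
  have Gc: "continuous_on UNIV (\<lambda>p. G (fst p) (snd p))"
  proof -
    have "continuous_on UNIV (\<lambda>p. (\<lambda>q. g (fst q) (snd q)) (fst p, c (snd p)))"
      by (rule continuous_on_compose2[OF gc]) (auto intro!: continuous_intros continuous_on_compose2[OF c_cont])
    then show ?thesis unfolding G_def by simp
  qed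
  obtain B1 where B1: "\<forall>t\<in>{v0..v}. \<forall>x\<in>{m..M}. \<bar>g t x\<bar> \<le> B1"
    using compact_bound2[OF gc] by blast
  define B where "B = max 0 B1"
  have GB: "\<bar>G t x\<bar> \<le> B" if "t \<in> {v0..v}" for t x
  proof -
    have "\<bar>g t (c x)\<bar> \<le> B1" using B1 that c_in by blast
    then show ?thesis unfolding G_def B_def by linarith
  qed
  obtain L where L0: "L \<ge> 0" and L: "\<forall>t\<in>{v0..v}. \<forall>x\<in>{m..M}. \<forall>y\<in>{m..M}. \<bar>g t x - g t y\<bar> \<le> L * \<bar>x - y\<bar>"
    using lip2[OF gd gxc] by blast
  have GL: "\<bar>G t x - G t y\<bar> \<le> L * \<bar>x - y\<bar>" if "t \<in> {v0..v}" for t x y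
  proof -
    have "\<bar>g t (c x) - g t (c y)\<bar> \<le> L * \<bar>c x - c y\<bar>" using L that c_in by blast
    also have "\<dots> \<le> L * \<bar>x - y\<bar>" by (rule mult_left_mono[OF c_lip L0])
    finally show ?thesis unfolding G_def .
  qed
  obtain \<gamma> where sol: "solves G \<gamma> v0 v" and gv: "\<gamma> v = r0"
    using exist_global[OF Gc GB GL L0 _ v, of r0] unfolding B_def by auto
  have gder: "(\<gamma> has_real_derivative G t (\<gamma> t)) (at t within {v0..v})" if "t \<in> {v0..v}" for t
    using sol that unfolding solves_def by blast
  have up: "\<forall>t\<in>{v0..<v}. \<gamma> t - rp t < 0"
  proof (rule barrier[where \<phi>' = "\<lambda>t. G t (\<gamma> t) - rp' t"])
    fix t assume t: "t \<in> {v0..v}"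
    show "((\<lambda>t. \<gamma> t - rp t) has_real_derivative G t (\<gamma> t) - rp' t) (at t within {v0..v})"
      using DERIV_diff[OF gder[OF t] has_field_derivative_at_within[OF rp_der]] by simp
  next
    fix t assume t: "t \<in> {v0..v}" and z: "\<gamma> t - rp t = 0"
    have "rp t \<in> {m..M}" using rpM[of t] rmm[of t] hor[of t] t by auto
    moreover have e: "\<gamma> t = rp t" using z by simp
    ultimately have "G t (\<gamma> t) = 0" unfolding G_def e using c_id gzp by simp
    then show "G t (\<gamma> t) - rp' t > 0" using rp_neg[of t] by simp
  qed (use v gv r0 in auto)
  have lo: "\<forall>t\<in>{v0..<v}. rm t - \<gamma> t < 0"
  proof (rule barrier[where \<phi>' = "\<lambda>t. rm' t - G t (\<gamma> t)"])
    fix t assume t: "t \<in> {v0..v}"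
    show "((\<lambda>t. rm t - \<gamma> t) has_real_derivative rm' t - G t (\<gamma> t)) (at t within {v0..v})"
      using DERIV_diff[OF has_field_derivative_at_within[OF rm_der] gder[OF t]] by simp
  next
    fix t assume t: "t \<in> {v0..v}" and z: "rm t - \<gamma> t = 0"
    have "rm t \<in> {m..M}" using rpM[of t] rmm[of t] hor[of t] t by auto
    moreover have e: "\<gamma> t = rm t" using z by simp
    ultimately have "G t (\<gamma> t) = 0" unfolding G_def e using c_id gzm by simp
    then show "rm' t - G t (\<gamma> t) > 0" using rm_pos[of t] by simp
  qed (use v gv r0 in auto)
  have bnd: "\<forall>t\<in>{v0..v}. rm t \<le> \<gamma> t \<and> \<gamma> t \<le> rp t"
  proof
    fix t assume t: "t \<in> {v0..v}"
    show "rm t \<le> \<gamma> t \<and> \<gamma> t \<le> rp t"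
    proof (cases "t = v")
      case True then show ?thesis using gv r0 by simp
    next
      case False then have "t \<in> {v0..<v}" using t by auto
      then show ?thesis using up lo by force
    qed
  qed
  have "solves g \<gamma> v0 v"
    unfolding solves_def
  proof
    fix t assume t: "t \<in> {v0..v}"
    have "\<gamma> t \<in> {m..M}" using bnd t rpM[of t] rmm[of t] by force
    then have "G t (\<gamma> t) = g t (\<gamma> t)" unfolding G_def using c_id by simp
    then show "(\<gamma> has_real_derivative g t (\<gamma> t)) (at t within {v0..v})" using gder[OF t] by simp
  qed
  moreover have "\<forall>t\<in>{v0..<v}. rm t < \<gamma> t \<and> \<gamma> t < rp t" using up lo by force
  ultimately show ?thesis using gv bnd by blast
qed



lemma mono_lim:
  fixes h :: "real \<Rightarrow> real"
  assumes mono: "\<And>x y. v0 \<le> x \<Longrightarrow> x \<le> y \<Longrightarrow> h x \<le> h y"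
    and bd: "\<And>x. v0 \<le> x \<Longrightarrow> h x \<le> K"
  shows "(h \<longlongrightarrow> Sup (h ` {v0..})) at_top \<and> (\<forall>x\<ge>v0. h x \<le> Sup (h ` {v0..}))"
proof -
  have ne: "h ` {v0..} \<noteq> {}" by auto
  have bdd: "bdd_above (h ` {v0..})" using bd by (intro bdd_aboveI[of _ K]) auto
  have up: "\<forall>x\<ge>v0. h x \<le> Sup (h ` {v0..})" using bdd by (auto intro: cSup_upper)
  have "(h \<longlongrightarrow> Sup (h ` {v0..})) at_top"
  proof (rule order_tendstoI)
    fix y assume y: "y < Sup (h ` {v0..})"
    then obtain x1 where x1: "x1 \<ge> v0" "y < h x1" using less_cSup_iff[OF ne bdd] by auto
    show "\<forall>\<^sub>F x in at_top. y < h x"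
      unfolding eventually_at_top_linorder
    proof (intro exI allI impI)
      fix x assume "x1 \<le> x"
      then show "y < h x" using mono[OF x1(1), of x] x1 by linarith
    qed
  next
    fix y assume y: "Sup (h ` {v0..}) < y"
    show "\<forall>\<^sub>F x in at_top. h x < y"
      unfolding eventually_at_top_linorder
    proof (intro exI allI impI)
      fix x assume "v0 \<le> x"
      then show "h x < y" using up y by force
    qed
  qed
  then show ?thesis using up by blast
qed

lemma cmp:
  fixes g gx :: "real \<Rightarrow> real \<Rightarrow> real"
  assumes gd: "\<And>t x. ((\<lambda>y. g t y) has_real_derivative gx t x) (at x)"
    and gxc: "continuous_on UNIV (\<lambda>p. gx (fst p) (snd p))"
    and s1: "solves g x a b" and s2: "solves g y a b" and ab: "a \<le> b" and lt: "x b < y b"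
  shows "x a < y a"
proof (rule ccontr)
  assume "\<not> x a < y a"
  then have ge: "(\<lambda>t. x t - y t) a \<ge> 0" by simp
  have "continuous_on {a..b} (\<lambda>t. x t - y t)"
    using solves_cont[OF s1] solves_cont[OF s2] by (intro continuous_intros)
  then obtain c where c: "a \<le> c" "c \<le> b" "x c - y c = 0"
    using IVT2'[of "\<lambda>t. x t - y t" b 0 a] ge lt ab by auto
  then have "\<forall>t\<in>{a..b}. x t = y t" using uniq[OF gd gxc s1 s2, of c] by auto
  then show False using lt ab by auto
qed

lemma U_val:
  fixes f A g gx :: "real \<Rightarrow> real \<Rightarrow> real"
  assumes gdef: "\<And>t x. g t x = f t x * A t x / 2"
    and gd: "\<And>t x. ((\<lambda>y. g t y) has_real_derivative gx t x) (at x)"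
    and gxc: "continuous_on UNIV (\<lambda>p. gx (fst p) (snd p))"
    and sol: "solves g \<gamma> v0 v" and v: "v0 \<le> v" and pos: "\<forall>t\<in>{v0..v}. \<gamma> t > 0" and r: "\<gamma> v = r"
  shows "U_coord f A v0 rc v r = - (2 / pi) * arctan (\<gamma> v0 / rc)"
proof -
  have ong: "out_null_geod f A \<delta> a b \<longleftrightarrow> a \<le> b \<and> (\<forall>t\<in>{a..b}. 0 \<le> \<delta> t) \<and> solves g \<delta> a b" for \<delta> a b
    unfolding out_null_geod_def solves_def gdef by auto
  show ?thesis
    unfolding U_coord_def
  proof (rule the_equality)
    show "\<exists>\<delta> a. out_null_geod f A \<delta> a v \<and> \<delta> v = r \<and> v0 \<le> a \<and>
      (a = v0 \<and> - (2 / pi) * arctan (\<gamma> v0 / rc) = - (2 / pi) * arctan (\<delta> v0 / rc) \<or>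
       \<delta> a = 0 \<and> - (2 / pi) * arctan (\<gamma> v0 / rc) = 2 / pi * arctan ((a - v0) / rc))"
      using ong[of \<gamma> v0 v] sol v pos r by (intro exI[of _ \<gamma>] exI[of _ v0]) force
  next
    fix u assume "\<exists>\<delta> a. out_null_geod f A \<delta> a v \<and> \<delta> v = r \<and> v0 \<le> a \<and>
      (a = v0 \<and> u = - (2 / pi) * arctan (\<delta> v0 / rc) \<or> \<delta> a = 0 \<and> u = 2 / pi * arctan ((a - v0) / rc))"
    then obtain \<delta> a where d: "out_null_geod f A \<delta> a v" "\<delta> v = r" "v0 \<le> a"
      and disj: "(a = v0 \<and> u = - (2 / pi) * arctan (\<delta> v0 / rc) \<or> \<delta> a = 0 \<and> u = 2 / pi * arctan ((a - v0) / rc))"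
      by blast
    have av: "a \<le> v" and sd: "solves g \<delta> a v" using d(1) ong by auto
    have sg: "solves g \<gamma> a v" by (rule solves_sub[OF sol d(3)]) simp
    have eq: "\<forall>t\<in>{a..v}. \<delta> t = \<gamma> t" using uniq[OF gd gxc sd sg, of v] av d(2) r by auto
    from disj show "u = - (2 / pi) * arctan (\<gamma> v0 / rc)"
    proof
      assume "a = v0 \<and> u = - (2 / pi) * arctan (\<delta> v0 / rc)"
      then show ?thesis using eq av by auto
    next
      assume "\<delta> a = 0 \<and> u = 2 / pi * arctan ((a - v0) / rc)"
      then have "\<gamma> a = 0" using eq av by auto
      moreover have "\<gamma> a > 0" using pos d(3) av by auto
      ultimately show ?thesis by simp
    qed
  qed
qed

lemma Uform_mono:
  assumes rc: "rc > 0" and xy: "x < y"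
  shows "- (2 / pi) * arctan (y / rc) < - (2 / pi) * arctan (x / rc)"
proof -
  have "x / rc < y / rc" using rc xy by (simp add: divide_strict_right_mono)
  then have "arctan (x / rc) < arctan (y / rc)" by (simp add: arctan_less_iff)
  then have "(2 / pi) * arctan (x / rc) < (2 / pi) * arctan (y / rc)"
    by (intro mult_strict_left_mono) (auto simp: pi_gt_zero)
  then show ?thesis by simp
qed

lemma Uform_gt: "- (2 / pi) * arctan z > -1"
proof -
  have "(2 / pi) * arctan z < (2 / pi) * (pi / 2)"
    by (intro mult_strict_left_mono arctan_ubound) (auto simp: pi_gt_zero)
  then show ?thesis by simp
qed

lemma Uform_lt: assumes "z > 0" shows "- (2 / pi) * arctan z < 1"
proof -
  have "arctan 0 < arctan z" using assms by (simp add: arctan_less_iff)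
  then have "0 < (2 / pi) * arctan z" by (simp add: pi_gt_zero)
  then show ?thesis by simp
qed



theorem theorem2:
  fixes f A F fr Ar :: "real \<Rightarrow> real \<Rightarrow> real"
    and rp rm :: "real \<Rightarrow> real"
    and rc v0 :: real
  assumes A_pos: "\<And>v r. A v r > 0"
    and f_cont: "continuous_on UNIV (\<lambda>p. f (fst p) (snd p))"
    and A_cont: "continuous_on UNIV (\<lambda>p. A (fst p) (snd p))"
    and f_dr: "\<And>v r. ((\<lambda>s. f v s) has_real_derivative fr v r) (at r)"
    and A_dr: "\<And>v r. ((\<lambda>s. A v s) has_real_derivative Ar v r) (at r)"
    and fr_cont: "continuous_on UNIV (\<lambda>p. fr (fst p) (snd p))"
    and Ar_cont: "continuous_on UNIV (\<lambda>p. Ar (fst p) (snd p))"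
    and f_infty: "\<And>v. ((\<lambda>r. f v r) \<longlongrightarrow> 1) at_top"
    and A_infty: "\<And>v. ((\<lambda>r. A v r) \<longlongrightarrow> 1) at_top"
    and f_centre: "\<And>v. f v 0 = 1"
    and fr_centre: "\<And>v. fr v 0 = 0"
    and Ar_centre: "\<And>v. Ar v 0 = 0"
    and horizons: "\<And>v. 0 < rm v \<and> rm v < rp v"
    and F_pos: "\<And>v r. F v r > 0"
    and factor: "\<And>v r. f v r = F v r * (r - rp v) * (r - rm v)"
    and rp_diff: "\<And>v. rp differentiable (at v)"
    and rp_decr: "\<And>v. deriv rp v < 0"
    and rp_lim: "(rp \<longlongrightarrow> rc) at_top"
    and rm_lim: "(rm \<longlongrightarrow> rc) at_top"
    and rm_diff: "\<And>v. rm differentiable (at v)"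
    and case2: "\<And>v. deriv rm v > 0"
    and h_smooth: "\<And>n v r. r > 0 \<Longrightarrow> (deriv ^^ n) (\<lambda>s. A v s * F v s) differentiable (at r)"
    and h_limit: "\<exists>hinf. (\<forall>r>0. real_analytic_at hinf r) \<and>
        (\<forall>n. \<forall>r>0. ((\<lambda>v. (deriv ^^ n) (\<lambda>s. A v s * F v s) r) \<longlongrightarrow> (deriv ^^ n) hinf r) at_top)"
  shows "\<exists>Upinf Uminf.
     ((\<lambda>v. U_coord f A v0 rc v (rp v)) \<longlongrightarrow> Upinf) at_top \<and>
     ((\<lambda>v. U_coord f A v0 rc v (rm v)) \<longlongrightarrow> Uminf) at_top \<and>
     -1 < U_coord f A v0 rc v0 (rp v0) \<and>
     U_coord f A v0 rc v0 (rp v0) < Upinf \<and>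
     Upinf \<le> Uminf \<and>
     Uminf < U_coord f A v0 rc v0 (rm v0) \<and>
     U_coord f A v0 rc v0 (rm v0) < 1 \<and>
     (Upinf = Uminf \<or> Upinf < Uminf)"
proof -
  define g where "g t x = f t x * A t x / 2" for t x
  define gx where "gx t x = (fr t x * A t x + Ar t x * f t x) / 2" for t x
  have gc: "continuous_on UNIV (\<lambda>p. g (fst p) (snd p))"
    unfolding g_def by (intro continuous_intros f_cont A_cont) auto
  have gd: "((\<lambda>y. g t y) has_real_derivative gx t x) (at x)" for t x
    using DERIV_cdivide[OF DERIV_mult[OF f_dr[of t x] A_dr[of t x]], of 2] unfolding g_def gx_def by simp
  have gxc: "continuous_on UNIV (\<lambda>p. gx (fst p) (snd p))"
    unfolding gx_def by (intro continuous_intros f_cont A_cont fr_cont Ar_cont) auto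
  have rp_der: "(rp has_real_derivative deriv rp t) (at t)" for t
    using rp_diff DERIV_deriv_iff_real_differentiable by blast
  have rm_der: "(rm has_real_derivative deriv rm t) (at t)" for t
    using rm_diff DERIV_deriv_iff_real_differentiable by blast
  have gzp: "g t (rp t) = 0" for t unfolding g_def factor by simp
  have gzm: "g t (rm t) = 0" for t unfolding g_def factor by simp
  have hor: "rm t < rp t" for t using horizons by blast
  have rmpos: "rm t > 0" for t using horizons by blast
  have rm_inc: "rm x \<le> rm y" if "x \<le> y" for x y
  proof (cases "x = y")
    case False
    then show ?thesis using that
      by (intro less_imp_le DERIV_pos_imp_increasing[of x y rm]) (use rm_der case2 in auto)
  qed simp
  have rc: "rc > 0"
  proof -
    have "rm v0 \<le> rc"
      by (rule tendsto_lowerbound[OF rm_lim]) (auto simp: eventually_at_top_linorder intro!: exI[of _ v0] rm_inc)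
    then show ?thesis using rmpos[of v0] by linarith
  qed
  have ex: "\<exists>\<gamma>. solves g \<gamma> v0 v \<and> \<gamma> v = r0 \<and> (\<forall>t\<in>{v0..v}. rm t \<le> \<gamma> t \<and> \<gamma> t \<le> rp t)
           \<and> (\<forall>t\<in>{v0..<v}. rm t < \<gamma> t \<and> \<gamma> t < rp t)"
    if "v0 \<le> v" "rm v \<le> r0" "r0 \<le> rp v" for v r0
    by (rule main_exist[OF gc gd gxc rp_der rp_decr rm_der case2 gzp gzm hor that])
  have ex2: "\<exists>\<gamma>. solves g \<gamma> v0 v \<and> \<gamma> v = r0 \<and> (\<forall>t\<in>{v0..v}. rm t \<le> \<gamma> t \<and> \<gamma> t \<le> rp t)
           \<and> (\<forall>t\<in>{v0..<v}. rm t < \<gamma> t \<and> \<gamma> t < rp t)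
           \<and> U_coord f A v0 rc v r0 = - (2 / pi) * arctan (\<gamma> v0 / rc)"
    if v: "v0 \<le> v" "rm v \<le> r0" "r0 \<le> rp v" for v r0
  proof -
    obtain \<gamma> where \<gamma>: "solves g \<gamma> v0 v" "\<gamma> v = r0" "\<forall>t\<in>{v0..v}. rm t \<le> \<gamma> t \<and> \<gamma> t \<le> rp t"
      "\<forall>t\<in>{v0..<v}. rm t < \<gamma> t \<and> \<gamma> t < rp t"
      using ex[OF v] by blast
    have pos: "\<forall>t\<in>{v0..v}. \<gamma> t > 0"
    proof
      fix t assume "t \<in> {v0..v}"
      then have "rm t \<le> \<gamma> t" using \<gamma>(3) by blast
      then show "\<gamma> t > 0" using rmpos[of t] by linarith
    qed
    have "U_coord f A v0 rc v r0 = - (2 / pi) * arctan (\<gamma> v0 / rc)"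
      by (rule U_val[OF g_def gd gxc \<gamma>(1) v(1) pos \<gamma>(2)])
    then show ?thesis using \<gamma> by blast
  qed
  define Up where "Up v = U_coord f A v0 rc v (rp v)" for v
  define Um where "Um v = U_coord f A v0 rc v (rm v)" for v
  have Up_inc: "Up v < Up v'" if vv: "v0 \<le> v" "v < v'" for v v'
  proof -
    obtain \<gamma> where \<gamma>: "solves g \<gamma> v0 v" "\<gamma> v = rp v" "Up v = - (2 / pi) * arctan (\<gamma> v0 / rc)"
      using ex2[of v "rp v"] vv hor[of v] unfolding Up_def by auto
    obtain \<delta> where \<delta>: "solves g \<delta> v0 v'" "\<forall>t\<in>{v0..<v'}. rm t < \<delta> t \<and> \<delta> t < rp t"
      "Up v' = - (2 / pi) * arctan (\<delta> v0 / rc)"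
      using ex2[of v' "rp v'"] vv hor[of v'] unfolding Up_def by auto
    have "\<delta> v < \<gamma> v" using \<delta>(2) vv \<gamma>(2) by auto
    then have "\<delta> v0 < \<gamma> v0"
      by (intro cmp[OF gd gxc solves_sub[OF \<delta>(1)] \<gamma>(1)]) (use vv in auto)
    then show ?thesis using \<gamma>(3) \<delta>(3) Uform_mono[OF rc] by simp
  qed
  have Um_dec: "Um v' < Um v" if vv: "v0 \<le> v" "v < v'" for v v'
  proof -
    obtain \<gamma> where \<gamma>: "solves g \<gamma> v0 v" "\<gamma> v = rm v" "Um v = - (2 / pi) * arctan (\<gamma> v0 / rc)"
      using ex2[of v "rm v"] vv hor[of v] unfolding Um_def by auto
    obtain \<delta> where \<delta>: "solves g \<delta> v0 v'" "\<forall>t\<in>{v0..<v'}. rm t < \<delta> t \<and> \<delta> t < rp t"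
      "Um v' = - (2 / pi) * arctan (\<delta> v0 / rc)"
      using ex2[of v' "rm v'"] vv hor[of v'] unfolding Um_def by auto
    have "\<gamma> v < \<delta> v" using \<delta>(2) vv \<gamma>(2) by auto
    then have "\<gamma> v0 < \<delta> v0"
      by (intro cmp[OF gd gxc \<gamma>(1) solves_sub[OF \<delta>(1)]]) (use vv in auto)
    then show ?thesis using \<gamma>(3) \<delta>(3) Uform_mono[OF rc] by simp
  qed
  have Up_Um: "Up v < Um v" if vv: "v0 \<le> v" for v
  proof -
    obtain \<gamma> where \<gamma>: "solves g \<gamma> v0 v" "\<gamma> v = rp v" "Up v = - (2 / pi) * arctan (\<gamma> v0 / rc)"
      using ex2[of v "rp v"] vv hor[of v] unfolding Up_def by auto
    obtain \<delta> where \<delta>: "solves g \<delta> v0 v" "\<delta> v = rm v" "Um v = - (2 / pi) * arctan (\<delta> v0 / rc)"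
      using ex2[of v "rm v"] vv hor[of v] unfolding Um_def by auto
    have "\<delta> v0 < \<gamma> v0"
      by (intro cmp[OF gd gxc \<delta>(1) \<gamma>(1)]) (use vv \<gamma>(2) \<delta>(2) hor[of v] in auto)
    then show ?thesis using \<gamma>(3) \<delta>(3) Uform_mono[OF rc] by simp
  qed
  have Up0: "Up v0 = - (2 / pi) * arctan (rp v0 / rc)"
  proof -
    obtain \<gamma> where \<gamma>: "\<gamma> v0 = rp v0" "Up v0 = - (2 / pi) * arctan (\<gamma> v0 / rc)"
      using ex2[of v0 "rp v0"] hor[of v0] unfolding Up_def by auto
    then show ?thesis by simp
  qed
  have Um0: "Um v0 = - (2 / pi) * arctan (rm v0 / rc)"
  proof -
    obtain \<gamma> where \<gamma>: "\<gamma> v0 = rm v0" "Um v0 = - (2 / pi) * arctan (\<gamma> v0 / rc)"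
      using ex2[of v0 "rm v0"] hor[of v0] unfolding Um_def by auto
    then show ?thesis by simp
  qed
  have Up_mono: "Up x \<le> Up y" if "v0 \<le> x" "x \<le> y" for x y
    using Up_inc[of x y] that by (cases "x = y") auto
  have Um_mono: "- Um x \<le> - Um y" if "v0 \<le> x" "x \<le> y" for x y
    using Um_dec[of x y] that by (cases "x = y") auto
  have Up_bd: "Up x \<le> Um v0" if "v0 \<le> x" for x
    using Up_Um[OF that] Um_dec[of v0 x] that by (cases "x = v0") auto
  have Um_bd: "- Um x \<le> - Up v0" if "v0 \<le> x" for x
    using Up_Um[OF that] Up_inc[of v0 x] that by (cases "x = v0") auto
  define Upinf where "Upinf = Sup (Up ` {v0..})"
  define Uminf where "Uminf = - Sup ((\<lambda>v. - Um v) ` {v0..})"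
  have limp: "(Up \<longlongrightarrow> Upinf) at_top" and Upup: "\<forall>x\<ge>v0. Up x \<le> Upinf"
    using mono_lim[of v0 Up, OF Up_mono Up_bd] unfolding Upinf_def by auto
  have limm0: "((\<lambda>v. - Um v) \<longlongrightarrow> - Uminf) at_top" and Umlo0: "\<forall>x\<ge>v0. - Um x \<le> - Uminf"
    using mono_lim[of v0 "\<lambda>v. - Um v", OF Um_mono Um_bd] unfolding Uminf_def by auto
  have limm: "(Um \<longlongrightarrow> Uminf) at_top"
    using tendsto_minus[OF limm0] by simp
  have Umlo: "\<forall>x\<ge>v0. Uminf \<le> Um x" using Umlo0 by auto
  have le: "Upinf \<le> Uminf"
    by (rule tendsto_le[OF _ limm limp]) (auto simp: eventually_at_top_linorder intro!: exI[of _ v0] less_imp_le Up_Um)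
  have c1: "-1 < Up v0" unfolding Up0 by (rule Uform_gt)
  have c2: "Up v0 < Upinf"
  proof -
    have "Up v0 < Up (v0 + 1)" by (rule Up_inc) auto
    moreover have "Up (v0 + 1) \<le> Upinf" using Upup by simp
    ultimately show ?thesis by linarith
  qed
  have c3: "Uminf < Um v0"
  proof -
    have "Um (v0 + 1) < Um v0" by (rule Um_dec) auto
    moreover have "Uminf \<le> Um (v0 + 1)" using Umlo by simp
    ultimately show ?thesis by linarith
  qed
  have c4: "Um v0 < 1" unfolding Um0 by (rule Uform_lt) (use rmpos[of v0] rc in simp)
  show ?thesis
    apply (rule exI[of _ Upinf], rule exI[of _ Uminf])
    using limp limm c1 c2 c3 c4 le unfolding Up_def Um_def by auto
qed

end
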